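(* For any $k$ and $d$, there exists $m=O(k^2\log k)$ such that for any $d$-dimensional $k$-Fourier-sparse signal $x(t)$, any $t_0\in\mathbb{R}^d_{\ge0}$ and any $\tau\in\mathbb{R}^d_{>0}$, there exist $C_1,\dots,C_m\in\mathbb{C}$ such that $|C_j|\le 11$ for all $j\in[m]$ and $$x(t_0)=\sum_{j\in[m]}C_j\,x(t_0+j\tau).$$
   Context: A $d$-dimensional $k$-Fourier-sparse signal is a function $x:\mathbb{R}^d\to\mathbb{C}$ of the form $x(t)=\sum_{i=1}^k v_ie^{2\pi i\langle f_i,t\rangle}$ with $v_i\in\mathbb{C}$, $f_i\in\mathbb{R}^d$. *)

theory Defs
  imports Complex_Main
begin

text \<open>Vectors in R^d are represented as functions nat => real; only the
  coordinates l < d matter.  Inner product on R^d:\<close>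
definition inner_d :: "nat \<Rightarrow> (nat \<Rightarrow> real) \<Rightarrow> (nat \<Rightarrow> real) \<Rightarrow> real" where
  "inner_d d a b = (\<Sum>l<d. a l * b l)"

definition sparse_signal ::
  "nat \<Rightarrow> nat \<Rightarrow> (nat \<Rightarrow> complex) \<Rightarrow> (nat \<Rightarrow> nat \<Rightarrow> real) \<Rightarrow> (nat \<Rightarrow> real) \<Rightarrow> complex" where
  "sparse_signal d k v f t = (\<Sum>i<k. v i * exp (2 * pi * \<i> * complex_of_real (inner_d d (f i) t)))"

end

theory Submission
  imports Defs "HOL-Library.FuncSet"
begin

fun gg :: "(nat \<Rightarrow> complex) \<Rightarrow> nat \<Rightarrow> nat \<Rightarrow> complex" where
  "gg u 0 0 = 1"
| "gg u (Suc l) 0 = 0"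
| "gg u 0 (Suc j) = u 0 * gg u 0 j"
| "gg u (Suc l) (Suc j) = gg u l j + u (Suc l) * gg u (Suc l) j"

fun ee :: "(nat \<Rightarrow> complex) \<Rightarrow> nat \<Rightarrow> nat \<Rightarrow> complex" where
  "ee u 0 a = (if a = 0 then 1 else 0)"
| "ee u (Suc l) 0 = - u l * ee u l 0"
| "ee u (Suc l) (Suc a) = ee u l a - u l * ee u l (Suc a)"

definition NN :: "(nat \<Rightarrow> complex) \<Rightarrow> nat \<Rightarrow> complex \<Rightarrow> complex" where
  "NN u l z = (\<Prod>i<l. z - u i)"

lemma gg_zero: "j < l \<Longrightarrow> gg u l j = 0"
proof (induction j arbitrary: l)
  case 0 then show ?case by (cases l) auto
next
  case (Suc j) then show ?case by (cases l) auto
qed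

lemma ee_zero: "l < a \<Longrightarrow> ee u l a = 0"
proof (induction l arbitrary: a)
  case 0 then show ?case by auto
next
  case (Suc l) then show ?case by (cases a) auto
qed

lemma gg_bound:
  assumes "\<And>i. norm (u i) \<le> 1"
  shows "norm (gg u l j) \<le> real (j choose l)"
proof (induction j arbitrary: l)
  case 0 then show ?case by (cases l) auto
next
  case (Suc j)
  show ?case
  proof (cases l)
    case 0
    have "norm (u 0 * gg u 0 j) \<le> 1 * 1"
      unfolding norm_mult using assms[of 0] Suc[of 0]
      by (intro mult_mono) auto
    then show ?thesis using 0 by simp
  next
    case (Suc l')
    have "norm (gg u l' j + u (Suc l') * gg u (Suc l') j) \<le> norm (gg u l' j) + norm (u (Suc l')) * norm (gg u (Suc l') j)"
      by (metis norm_mult norm_triangle_ineq)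
    also have "\<dots> \<le> real (j choose l') + 1 * real (j choose Suc l')"
      using Suc.IH[of l'] Suc.IH[of "Suc l'"] assms[of "Suc l'"]
      by (intro add_mono mult_mono) auto
    finally show ?thesis using Suc by simp
  qed
qed

lemma ee_bound:
  assumes "\<And>i. norm (u i) \<le> 1"
  shows "norm (ee u l a) \<le> real (l choose a)"
proof (induction l arbitrary: a)
  case 0 then show ?case by auto
next
  case (Suc l)
  show ?case
  proof (cases a)
    case 0
    have "norm (- u l * ee u l 0) \<le> 1 * 1"
      unfolding norm_mult norm_minus_cancel using assms[of l] Suc[of 0]
      by (intro mult_mono) auto
    then show ?thesis using 0 by simp
  next
    case (Suc a')
    have "norm (ee u l a' - u l * ee u l (Suc a')) \<le> norm (ee u l a') + norm (u l) * norm (ee u l (Suc a'))"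
      by (metis norm_mult norm_triangle_ineq4)
    also have "\<dots> \<le> real (l choose a') + 1 * real (l choose Suc a')"
      using Suc.IH[of a'] Suc.IH[of "Suc a'"] assms[of l]
      by (intro add_mono mult_mono) auto
    finally show ?thesis using Suc by simp
  qed
qed

lemma NN_Suc: "NN u (Suc l) z = z * NN u l z - u l * NN u l z"
  unfolding NN_def by (simp add: algebra_simps)

lemma newton: "z ^ j = (\<Sum>l\<le>j. gg u l j * NN u l z)"
proof (induction j)
  case 0 then show ?case by (simp add: NN_def)
next
  case (Suc j)
  have e1: "(\<Sum>l\<le>j. u l * gg u l j * NN u l z) = (\<Sum>l\<le>Suc j. u l * gg u l j * NN u l z)"
    using gg_zero[of j "Suc j" u] by simp
  have "z ^ Suc j = (\<Sum>l\<le>j. gg u l j * (z * NN u l z))"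
    using Suc by (simp add: sum_distrib_left algebra_simps)
  also have "\<dots> = (\<Sum>l\<le>j. gg u l j * NN u (Suc l) z) + (\<Sum>l\<le>j. u l * gg u l j * NN u l z)"
    by (simp add: NN_Suc sum_subtractf algebra_simps)
  also have "\<dots> = (\<Sum>l\<le>j. gg u l j * NN u (Suc l) z) + (u 0 * gg u 0 j * NN u 0 z + (\<Sum>l\<le>j. u (Suc l) * gg u (Suc l) j * NN u (Suc l) z))"
    unfolding e1 sum.atMost_Suc_shift by simp
  also have "\<dots> = (\<Sum>l\<le>Suc j. gg u l (Suc j) * NN u l z)"
    unfolding sum.atMost_Suc_shift by (simp add: sum.distrib algebra_simps)
  finally show ?case .
qed

lemma NN_expand: "NN u l z = (\<Sum>a\<le>l. ee u l a * z ^ a)"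
proof (induction l)
  case 0 then show ?case by (simp add: NN_def)
next
  case (Suc l)
  have e1: "(\<Sum>a\<le>l. u l * ee u l a * z ^ a) = (\<Sum>a\<le>Suc l. u l * ee u l a * z ^ a)"
    using ee_zero[of l "Suc l" u] by simp
  have "NN u (Suc l) z = (\<Sum>a\<le>l. ee u l a * z ^ Suc a) - (\<Sum>a\<le>l. u l * ee u l a * z ^ a)"
    unfolding NN_Suc Suc by (simp add: sum_distrib_left algebra_simps)
  also have "\<dots> = (\<Sum>a\<le>l. ee u l a * z ^ Suc a) - (u l * ee u l 0 + (\<Sum>a\<le>l. u l * ee u l (Suc a) * z ^ Suc a))"
    unfolding e1 sum.atMost_Suc_shift by simp
  also have "\<dots> = (\<Sum>a\<le>Suc l. ee u (Suc l) a * z ^ a)"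
    unfolding sum.atMost_Suc_shift by (simp add: sum_subtractf algebra_simps)
  finally show ?case .
qed

lemma NN_vanish: "i < l \<Longrightarrow> NN u l (u i) = 0"
  unfolding NN_def by (rule prod_zero) auto

lemma newton_k: "i < k \<Longrightarrow> u i ^ j = (\<Sum>l<k. gg u l j * NN u l (u i))"
proof -
  assume ik: "i < k"
  have "u i ^ j = (\<Sum>l\<le>j. gg u l j * NN u l (u i))" by (rule newton)
  also have "\<dots> = (\<Sum>l<j+k+1. gg u l j * NN u l (u i))"
    by (rule sum.mono_neutral_left) (auto simp: gg_zero)
  also have "\<dots> = (\<Sum>l<k. gg u l j * NN u l (u i))"
    using ik by (intro sum.mono_neutral_right) (auto simp: NN_vanish)
  finally show ?thesis .
qed

lemma NN_k: "l < k \<Longrightarrow> NN u l z = (\<Sum>a<k. ee u l a * z ^ a)"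
  unfolding NN_expand
  by (rule sum.mono_neutral_left) (auto simp: ee_zero)

lemma floor_close: "\<lfloor>a::real\<rfloor> = \<lfloor>b\<rfloor> \<Longrightarrow> \<bar>a - b\<bar> < 1"
  using floor_correct[of a] floor_correct[of b] by linarith

lemma core:
  fixes k N :: nat and u :: "nat \<Rightarrow> complex"
  assumes k: "k \<ge> 1" and un: "\<And>i. norm (u i) \<le> 1"
    and big: "(2 * ((k+N)^(k+1) * (k * 2^(k+1))) + 3)^(2*k) < (2::nat)^N"
  shows "\<exists>q t. k \<le> t \<and> t < k + N \<and> norm (q t) = 1 \<and> (\<forall>j. norm (q j) \<le> 1) \<and>
           (\<forall>i<k. (\<Sum>j\<le>t. q j * u i ^ j) = 0)"
proof -
  define s where "s = real (k * 2^(k+1))"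
  have s_pos: "s > 0" using k by (simp add: s_def)
  define Bn where "Bn = (k+N)^(k+1) * (k * 2^(k+1))"
  define M where "M = int Bn + 1"
  define G where "G S l = (\<Sum>j\<in>S. gg u l j)" for S l
  define F where "F S = restrict (\<lambda>l. (\<lfloor>s * Re (G S l)\<rfloor>, \<lfloor>s * Im (G S l)\<rfloor>)) {..<k}" for S
  define T where "T = {-M..M} \<times> {-M..M}"
  define P where "P = Pow {k..<k+N}"
  have Gb: "norm (G S l) \<le> real ((k+N)^(k+1))" if "S \<subseteq> {k..<k+N}" "l < k" for S l
  proof -
    have fin: "finite S" using that(1) finite_subset by blast
    have "norm (G S l) \<le> (\<Sum>j\<in>S. norm (gg u l j))" unfolding G_def by (rule norm_sum)
    also have "\<dots> \<le> (\<Sum>j\<in>S. real ((k+N)^k))"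
    proof (rule sum_mono)
      fix j assume "j \<in> S"
      then have jl: "j \<le> k + N" using that(1) by auto
      have "j choose l \<le> (k+N)^k"
      proof (cases "l \<le> j")
        case True
        have "j choose l \<le> j ^ l" by (rule binomial_le_pow[OF True])
        also have "\<dots> \<le> (k+N)^l" by (rule power_mono[OF jl]) simp
        also have "\<dots> \<le> (k+N)^k" using that(2) k by (intro power_increasing) auto
        finally show ?thesis .
      next
        case False then show ?thesis by (simp add: binomial_eq_0)
      qed
      then show "norm (gg u l j) \<le> real ((k+N)^k)"
        using gg_bound[of u l j, OF un] by linarith
    qed
    also have "\<dots> = real (card S) * real ((k+N)^k)" by simp
    also have "\<dots> \<le> real (k+N) * real ((k+N)^k)"
    proof -
      have "card S \<le> card {k..<k+N}" using that(1) by (intro card_mono) auto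
      then have "card S \<le> k + N" by simp
      then show ?thesis by (intro mult_right_mono) auto
    qed
    also have "\<dots> = real ((k+N)^(k+1))" by simp
    finally show ?thesis .
  qed
  have flr: "\<lfloor>s * x\<rfloor> \<in> {-M..M}" if "\<bar>x\<bar> \<le> real ((k+N)^(k+1))" for x
  proof -
    have "\<bar>s * x\<bar> \<le> s * real ((k+N)^(k+1))"
      using that s_pos by (simp add: abs_mult mult_left_mono)
    also have "\<dots> = real Bn" by (simp add: s_def Bn_def)
    finally have "\<bar>s * x\<bar> \<le> real Bn" .
    then have "- real Bn \<le> s * x" "s * x \<le> real Bn" by linarith+
    then have "\<lfloor>s * x\<rfloor> \<ge> - int Bn - 1" "\<lfloor>s * x\<rfloor> \<le> int Bn"
      using floor_correct[of "s*x"] by linarith+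
    then show ?thesis unfolding M_def by auto
  qed
  have img: "F ` P \<subseteq> PiE {..<k} (\<lambda>_. T)"
  proof
    fix y assume "y \<in> F ` P"
    then obtain S where S: "S \<in> P" and y: "y = F S" by auto
    show "y \<in> PiE {..<k} (\<lambda>_. T)"
      unfolding y F_def T_def
    proof (rule restrict_PiE_iff[THEN iffD2], intro ballI)
      fix l assume "l \<in> {..<k}"
      then have gb: "norm (G S l) \<le> real ((k+N)^(k+1))" using Gb S unfolding P_def by auto
      have "\<bar>Re (G S l)\<bar> \<le> real ((k+N)^(k+1))" using abs_Re_le_cmod[of "G S l"] gb by linarith
      moreover have "\<bar>Im (G S l)\<bar> \<le> real ((k+N)^(k+1))" using abs_Im_le_cmod[of "G S l"] gb by linarith
      ultimately show "(\<lfloor>s * Re (G S l)\<rfloor>, \<lfloor>s * Im (G S l)\<rfloor>) \<in> {-M..M} \<times> {-M..M}"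
        using flr by auto
    qed
  qed
  have cardT: "card (PiE {..<k} (\<lambda>_. T)) = (2 * Bn + 3)^(2*k)"
  proof -
    have "card {-M..M} = 2 * Bn + 3" unfolding M_def by simp
    then have "card T = (2 * Bn + 3)^2" unfolding T_def by (simp add: card_cartesian_product power2_eq_square)
    then show ?thesis by (simp add: card_PiE power_mult)
  qed
  have cardP: "card P = 2^N" unfolding P_def by (simp add: card_Pow)
  have "\<not> inj_on F P"
  proof
    assume "inj_on F P"
    then have "card P \<le> card (PiE {..<k} (\<lambda>_. T))"
      using img by (intro card_inj_on_le) (auto simp: T_def intro!: finite_PiE)
    then show False using big cardT cardP unfolding Bn_def by simp
  qed
  then obtain S S' where SP: "S \<in> P" and S'P: "S' \<in> P" and neq: "S \<noteq> S'" and FF: "F S = F S'"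
    unfolding inj_on_def by blast
  have Ssub: "S \<subseteq> {k..<k+N}" "S' \<subseteq> {k..<k+N}" using SP S'P P_def by auto
  define D where "D j = (if j \<in> S then 1 else 0) - (if j \<in> S' then (1::complex) else 0)" for j
  define Gd where "Gd l = G S l - G S' l" for l
  have Gd_eq: "Gd l = (\<Sum>j<k+N. D j * gg u l j)" for l
  proof -
    have a: "G X l = (\<Sum>j<k+N. (if j \<in> X then gg u l j else 0))" if "X \<subseteq> {k..<k+N}" for X
    proof -
      have "G X l = sum (gg u l) ({..<k+N} \<inter> X)"
        unfolding G_def using that by (intro sum.cong) auto
      also have "\<dots> = (\<Sum>j<k+N. (if j \<in> X then gg u l j else 0))"
        by (rule sum.inter_restrict) simp
      finally show ?thesis .
    qed
    show ?thesis unfolding Gd_def a[OF Ssub(1)] a[OF Ssub(2)] D_def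
      by (simp add: sum_subtractf[symmetric]) (intro sum.cong, auto)
  qed
  have Gd_small: "norm (Gd l) \<le> 2 / s" if "l < k" for l
  proof -
    have "(\<lambda>l. (\<lfloor>s * Re (G S l)\<rfloor>, \<lfloor>s * Im (G S l)\<rfloor>)) l = (\<lambda>l. (\<lfloor>s * Re (G S' l)\<rfloor>, \<lfloor>s * Im (G S' l)\<rfloor>)) l"
      using fun_cong[OF FF, of l] that unfolding F_def by simp
    then have f1: "\<lfloor>s * Re (G S l)\<rfloor> = \<lfloor>s * Re (G S' l)\<rfloor>" and f2: "\<lfloor>s * Im (G S l)\<rfloor> = \<lfloor>s * Im (G S' l)\<rfloor>"
      by auto
    have "\<bar>s * Re (G S l) - s * Re (G S' l)\<bar> < 1" by (rule floor_close[OF f1])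
    then have r: "s * \<bar>Re (Gd l)\<bar> < 1" using s_pos unfolding Gd_def
      by (simp add: right_diff_distrib[symmetric] abs_mult)
    have "\<bar>s * Im (G S l) - s * Im (G S' l)\<bar> < 1" by (rule floor_close[OF f2])
    then have i: "s * \<bar>Im (Gd l)\<bar> < 1" using s_pos unfolding Gd_def
      by (simp add: right_diff_distrib[symmetric] abs_mult)
    have "s * norm (Gd l) \<le> s * (\<bar>Re (Gd l)\<bar> + \<bar>Im (Gd l)\<bar>)"
      using s_pos cmod_le[of "Gd l"] by (intro mult_left_mono) auto
    also have "\<dots> < 2" using r i by (simp add: distrib_left)
    finally show ?thesis using s_pos by (simp add: field_simps)
  qed
  define R where "R a = (\<Sum>l<k. Gd l * ee u l a)" for a
  have R_zero: "R a = 0" if "k \<le> a" for a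
    unfolding R_def using that by (intro sum.neutral) (auto simp: ee_zero)
  have R_small: "norm (R a) \<le> 1" for a
  proof -
    have "norm (R a) \<le> (\<Sum>l<k. norm (Gd l * ee u l a))" unfolding R_def by (rule norm_sum)
    also have "\<dots> \<le> (\<Sum>l<k. (2 / s) * 2^k)"
    proof (rule sum_mono)
      fix l assume l: "l \<in> {..<k}"
      have "norm (ee u l a) \<le> real (l choose a)" by (rule ee_bound[of u, OF un])
      also have "\<dots> \<le> 2 ^ l" using binomial_le_pow2[of l a] by (metis of_nat_le_iff of_nat_numeral of_nat_power)
      also have "\<dots> \<le> 2 ^ k" using l by (intro power_increasing) auto
      finally have "norm (ee u l a) \<le> 2 ^ k" .
      then show "norm (Gd l * ee u l a) \<le> (2 / s) * 2^k"
        unfolding norm_mult using Gd_small[of l] l s_pos by (intro mult_mono) auto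
    qed
    also have "\<dots> = 1" using k by (simp add: s_def field_simps)
    finally show ?thesis .
  qed
  define q where "q j = D j - R j" for j
  have eval: "(\<Sum>j<k+N. q j * u i ^ j) = 0" if ik: "i < k" for i
  proof -
    have "(\<Sum>j<k+N. D j * u i ^ j) = (\<Sum>j<k+N. D j * (\<Sum>l<k. gg u l j * NN u l (u i)))"
      using newton_k[OF ik] by simp
    also have "\<dots> = (\<Sum>j<k+N. \<Sum>l<k. D j * gg u l j * NN u l (u i))"
      by (simp add: sum_distrib_left mult.assoc)
    also have "\<dots> = (\<Sum>l<k. \<Sum>j<k+N. D j * gg u l j * NN u l (u i))"
      by (rule sum.swap)
    also have "\<dots> = (\<Sum>l<k. (\<Sum>j<k+N. D j * gg u l j) * NN u l (u i))"
      by (simp add: sum_distrib_right)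
    also have "\<dots> = (\<Sum>l<k. Gd l * (\<Sum>a<k. ee u l a * u i ^ a))"
      using Gd_eq NN_k by simp
    also have "\<dots> = (\<Sum>l<k. \<Sum>a<k. Gd l * ee u l a * u i ^ a)"
      by (simp add: sum_distrib_left mult.assoc)
    also have "\<dots> = (\<Sum>a<k. \<Sum>l<k. Gd l * ee u l a * u i ^ a)"
      by (rule sum.swap)
    also have "\<dots> = (\<Sum>a<k. R a * u i ^ a)"
      unfolding R_def by (simp add: sum_distrib_right)
    also have "\<dots> = (\<Sum>a<k+N. R a * u i ^ a)"
      by (rule sum.mono_neutral_left) (auto simp: R_zero)
    finally show ?thesis unfolding q_def by (simp add: algebra_simps sum_subtractf)
  qed
  define SD where "SD = (S - S') \<union> (S' - S)"
  have SDfin: "finite SD" using Ssub unfolding SD_def by (auto intro: finite_subset)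
  have SDne: "SD \<noteq> {}" using neq unfolding SD_def by auto
  define t where "t = Max SD"
  have tin: "t \<in> SD" unfolding t_def using SDfin SDne by (rule Max_in)
  have tk: "k \<le> t" "t < k + N" using tin Ssub unfolding SD_def by auto
  have qt: "norm (q t) = 1" using tin R_zero[OF tk(1)] unfolding q_def D_def SD_def by auto
  have qbig: "q j = 0" if "t < j" for j
  proof -
    have "j \<notin> SD" using Max_ge[OF SDfin, of j] that unfolding t_def by auto
    then have "D j = 0" unfolding D_def SD_def by auto
    moreover have "R j = 0" using R_zero tk that by auto
    ultimately show ?thesis unfolding q_def by simp
  qed
  have qb: "norm (q j) \<le> 1" for j
  proof (cases "j < k")
    case True
    then have "D j = 0" using Ssub unfolding D_def by auto
    then show ?thesis using R_small[of j] unfolding q_def by simp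
  next
    case False
    then show ?thesis using R_zero[of j] unfolding q_def D_def by auto
  qed
  have ev: "(\<Sum>j\<le>t. q j * u i ^ j) = 0" if "i < k" for i
  proof -
    have "(\<Sum>j\<le>t. q j * u i ^ j) = (\<Sum>j<k+N. q j * u i ^ j)"
      using tk by (intro sum.mono_neutral_left) (auto simp: qbig)
    then show ?thesis using eval[OF that] by simp
  qed
  show ?thesis using tk qt qb ev by blast
qed

lemma recover:
  fixes z w q :: "nat \<Rightarrow> complex"
  assumes zu: "\<And>i. norm (z i) = 1" and qt: "norm (q t) = 1" and qb: "\<And>j. norm (q j) \<le> 1"
    and ev: "\<And>i. i < k \<Longrightarrow> (\<Sum>j\<le>t. q j * cnj (z i) ^ j) = 0" and tm: "t \<le> m"
  shows "\<exists>C. (\<forall>j\<in>{1..m}. norm (C j) \<le> 11) \<and>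
           (\<Sum>i<k. w i) = (\<Sum>j\<in>{1..m}. C j * (\<Sum>i<k. w i * z i ^ j))"
proof -
  define Y where "Y n = (\<Sum>i<k. w i * z i ^ n)" for n
  have zc: "z i * cnj (z i) = 1" for i
    using complex_norm_square[of "z i"] zu[of i] by simp
  have pw: "z i ^ t * cnj (z i) ^ j = z i ^ (t - j)" if "j \<le> t" for i j
  proof -
    have "z i ^ t = z i ^ (t - j) * z i ^ j" using that by (simp add: power_add[symmetric])
    then have "z i ^ t * cnj (z i) ^ j = z i ^ (t - j) * (z i * cnj (z i)) ^ j"
      by (simp add: power_mult_distrib)
    then show ?thesis using zc by simp
  qed
  have "0 = (\<Sum>i<k. w i * z i ^ t * (\<Sum>j\<le>t. q j * cnj (z i) ^ j))"
    using ev by simp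
  also have "\<dots> = (\<Sum>i<k. \<Sum>j\<le>t. q j * (w i * z i ^ (t - j)))"
    by (intro sum.cong refl) (simp add: sum_distrib_left pw[symmetric] mult_ac)
  also have "\<dots> = (\<Sum>j\<le>t. \<Sum>i<k. q j * (w i * z i ^ (t - j)))"
    by (rule sum.swap)
  also have "\<dots> = (\<Sum>j\<le>t. q j * Y (t - j))"
    unfolding Y_def by (simp add: sum_distrib_left)
  also have "\<dots> = q t * Y 0 + (\<Sum>j<t. q j * Y (t - j))"
    by (simp add: lessThan_Suc_atMost[symmetric])
  also have "(\<Sum>j<t. q j * Y (t - j)) = (\<Sum>j\<in>{1..t}. q (t - j) * Y j)"
    by (rule sum.reindex_bij_witness[of _ "\<lambda>j. t - j" "\<lambda>j. t - j"]) auto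
  finally have rel: "q t * Y 0 = - (\<Sum>j\<in>{1..t}. q (t - j) * Y j)"
    by (simp add: eq_neg_iff_add_eq_0)
  have qt0: "q t \<noteq> 0" using qt by auto
  define C where "C j = (if j \<le> t then - q (t - j) / q t else 0)" for j
  have Cb: "norm (C j) \<le> 11" for j
    unfolding C_def using qb[of "t - j"] qt by (auto simp: norm_divide)
  have "(\<Sum>j\<in>{1..m}. C j * Y j) = (\<Sum>j\<in>{1..t}. C j * Y j)"
    using tm by (intro sum.mono_neutral_right) (auto simp: C_def)
  also have "\<dots> = (\<Sum>j\<in>{1..t}. - (q (t - j) * Y j) / q t)"
    unfolding C_def by (intro sum.cong) auto
  also have "\<dots> = - (\<Sum>j\<in>{1..t}. q (t - j) * Y j) / q t"
    by (simp add: sum_divide_distrib sum_negf)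
  also have "\<dots> = Y 0" using rel qt0 by (simp add: field_simps)
  finally show ?thesis using Cb unfolding Y_def by (intro exI[of _ C]) auto
qed

lemma expo_ineq:
  fixes k L :: nat assumes k: "k \<ge> 1" and L: "L \<ge> 1"
  shows "2*k*(k+3+(8+3*L)*(k+2)) < 128*k^2*L"
proof -
  have "4*k*1 \<le> 4*k*L" using L by (intro mult_le_mono2)
  then have a: "k + 3 \<le> 4*k*L" using k by linarith
  have b: "8 + 3*L \<le> 11*L" using L by linarith
  have c: "k + 2 \<le> 3*k" using k by linarith
  have "(8+3*L)*(k+2) \<le> (11*L)*(3*k)" using b c by (rule mult_le_mono)
  moreover have "11*L*(3*k) = 33*(k*L)" "4*k*L = 4*(k*L)" "37*k*L = 37*(k*L)" by simp_all
  ultimately have "k+3+(8+3*L)*(k+2) \<le> 37*k*L" using a by linarith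
  then have "2*k*(k+3+(8+3*L)*(k+2)) \<le> 2*k*(37*k*L)" by (rule mult_le_mono2)
  also have "\<dots> = 74*k^2*L" by (simp add: power2_eq_square)
  also have "\<dots> < 128*k^2*L" using k L by simp
  finally show ?thesis .
qed

lemma bigineq:
  fixes k L :: nat assumes k: "k \<ge> 1" and L: "L \<ge> 1" and kL: "k + 1 \<le> 2^L"
  shows "(2 * ((k+128*k^2*L)^(k+1) * (k * 2^(k+1))) + 3)^(2*k) < (2::nat)^(128*k^2*L)"
proof -
  define n where "n = k + 128*k^2*L"
  define E where "E = 8 + 3*L"
  have kp: "k \<le> 2^L" using kL by linarith
  have Lp: "L \<le> 2^L" using less_exp[of L] by linarith
  have "k^2*L \<le> (2^L)^2 * 2^L" using kp Lp by (intro mult_le_mono power_mono) auto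
  also have "\<dots> = 2^(3*L)" by (simp add: power_add[symmetric] power_mult[symmetric] mult.commute)
  finally have kk: "k^2*L \<le> 2^(3*L)" .
  have "2^L \<le> (2::nat)^(3*L)" by (intro power_increasing) auto
  then have "n \<le> 2^(3*L) + 128 * 2^(3*L)" unfolding n_def using kp kk by linarith
  also have "\<dots> \<le> 2^8 * 2^(3*L)" by simp
  also have "\<dots> = 2^E" by (simp add: E_def power_add)
  finally have nE: "n \<le> 2^E" .
  have n1: "n \<ge> 1" "k \<le> n" using k unfolding n_def by auto
  have "n^(k+1) * k \<le> n^(k+1) * n" using n1 by simp
  then have x: "n^(k+1) * k \<le> n^(k+2)" by simp
  have "2 * (n^(k+1) * (k * 2^(k+1))) = 2^(k+2) * (n^(k+1) * k)" by (simp add: algebra_simps)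
  also have "\<dots> \<le> 2^(k+2) * n^(k+2)" using x by simp
  finally have y: "2 * (n^(k+1) * (k * 2^(k+1))) \<le> 2^(k+2) * n^(k+2)" .
  have "(1::nat) \<le> 2^k" by simp
  then have "(3::nat) \<le> 4 * 2^k" by linarith
  then have "(3::nat) \<le> 2^(k+2)" by (simp add: power_add mult.commute)
  moreover have "(1::nat) \<le> n^(k+2)" using n1 by simp
  ultimately have "(3::nat) \<le> 2^(k+2) * n^(k+2)" by (metis mult_le_mono nat_mult_1_right)
  with y have "2 * (n^(k+1) * (k * 2^(k+1))) + 3 \<le> 2 * (2^(k+2) * n^(k+2))" by linarith
  also have "\<dots> = 2^(k+3) * n^(k+2)" by (simp add: power_add)
  also have "\<dots> \<le> 2^(k+3) * (2^E)^(k+2)" using nE by (intro mult_le_mono2 power_mono) auto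
  also have "\<dots> = 2^(k+3+E*(k+2))" by (simp only: power_add power_mult)
  finally have z: "2 * (n^(k+1) * (k * 2^(k+1))) + 3 \<le> 2^(k+3+E*(k+2))" .
  have "(2 * (n^(k+1) * (k * 2^(k+1))) + 3)^(2*k) \<le> (2^(k+3+E*(k+2)))^(2*k)"
    by (rule power_mono[OF z]) simp
  also have "\<dots> = 2^(2*k*(k+3+E*(k+2)))" by (simp add: power_mult[symmetric] mult.commute)
  also have "\<dots> < 2^(128*k^2*L)"
    using expo_ineq[OF k L] unfolding E_def by (intro power_strict_increasing) auto
  finally show ?thesis unfolding n_def .
qed


lemma signal_shift:
  "sparse_signal d k v f (\<lambda>l. t0 l + real j * \<tau> l) =
   (\<Sum>i<k. (v i * exp (2 * pi * \<i> * complex_of_real (inner_d d (f i) t0))) *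
            exp (2 * pi * \<i> * complex_of_real (inner_d d (f i) \<tau>)) ^ j)"
proof -
  have inn: "inner_d d a (\<lambda>l. t0 l + real j * \<tau> l) = inner_d d a t0 + real j * inner_d d a \<tau>" for a
    unfolding inner_d_def by (simp add: sum.distrib sum_distrib_left algebra_simps)
  have ex: "exp (2 * pi * \<i> * complex_of_real (A + real j * B)) =
            exp (2 * pi * \<i> * complex_of_real A) * exp (2 * pi * \<i> * complex_of_real B) ^ j" for A B
  proof -
    have "2 * pi * \<i> * complex_of_real (A + real j * B) =
          2 * pi * \<i> * complex_of_real A + of_nat j * (2 * pi * \<i> * complex_of_real B)"
      by (simp add: algebra_simps)
    then show ?thesis by (simp add: exp_add exp_of_nat_mult)
  qed
  show ?thesis unfolding sparse_signal_def inn ex by (simp add: mult.assoc)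
qed

lemma signal_zero:
  "sparse_signal d k v f t0 = (\<Sum>i<k. (v i * exp (2 * pi * \<i> * complex_of_real (inner_d d (f i) t0))))"
  unfolding sparse_signal_def by simp

lemma Lprops:
  fixes k :: nat assumes k: "k \<ge> 1"
  defines "L \<equiv> nat \<lceil>log 2 (real k + 1)\<rceil>"
  shows "L \<ge> 1" "k + 1 \<le> 2^L" "real L \<le> 2 * log 2 (real k + 1)"
proof -
  have lg: "log 2 (real k + 1) \<ge> 1" using k by simp
  have RL: "real L = of_int \<lceil>log 2 (real k + 1)\<rceil>" unfolding L_def using lg by simp
  have c1: "of_int \<lceil>log 2 (real k + 1)\<rceil> \<ge> log 2 (real k + 1)" by (rule le_of_int_ceiling)
  have c2: "of_int \<lceil>log 2 (real k + 1)\<rceil> < log 2 (real k + 1) + 1" using ceiling_correct[of "log 2 (real k + 1)"] by linarith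
  show "L \<ge> 1" using RL c1 lg by linarith
  have "real (k + 1) = 2 powr log 2 (real k + 1)" by simp
  also have "\<dots> \<le> 2 powr real L" using RL c1 by (intro powr_mono) auto
  also have "\<dots> = real (2 ^ L)" by (simp add: powr_realpow)
  finally show "k + 1 \<le> 2^L" by linarith
  show "real L \<le> 2 * log 2 (real k + 1)" using RL c2 lg by linarith
qed


lemma mbound:
  fixes k :: nat
  defines "L \<equiv> nat \<lceil>log 2 (real k + 1)\<rceil>"
  shows "real (k + 128*k^2*L) \<le> (257 / ln 2) * (real k)^2 * ln (real k + 1)"
proof (cases "k = 0")
  case True then show ?thesis by simp
next
  case False
  then have k: "k \<ge> 1" by simp
  have lg: "log 2 (real k + 1) \<ge> 1" using k by simp
  have LL: "real L \<le> 2 * log 2 (real k + 1)" using Lprops(3)[OF k] unfolding L_def .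
  have kk: "real k \<le> (real k)^2" using k by (simp add: power2_eq_square)
  have "real (k + 128*k^2*L) = real k + 128 * (real k)^2 * real L" by simp
  also have "\<dots> \<le> (real k)^2 * log 2 (real k + 1) + 128 * (real k)^2 * (2 * log 2 (real k + 1))"
  proof (intro add_mono mult_left_mono LL)
    show "real k \<le> (real k)^2 * log 2 (real k + 1)"
    proof -
      have "(real k)^2 * 1 \<le> (real k)^2 * log 2 (real k + 1)" using lg by (intro mult_left_mono) auto
      then show ?thesis using kk by linarith
    qed
  qed auto
  also have "\<dots> = 257 * (real k)^2 * log 2 (real k + 1)" by (simp add: algebra_simps)
  also have "\<dots> = (257 / ln 2) * (real k)^2 * ln (real k + 1)" by (simp add: log_def)
  finally show ?thesis .
qed

theorem lemma5p4:
  shows "\<exists>c::real. c > 0 \<and>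
    (\<forall>k d::nat. \<exists>m::nat. real m \<le> c * (real k)^2 * ln (real k + 1) \<and>
      (\<forall>(v::nat \<Rightarrow> complex) (f::nat \<Rightarrow> nat \<Rightarrow> real) (t0::nat \<Rightarrow> real) (\<tau>::nat \<Rightarrow> real).
         (\<forall>l<d. t0 l \<ge> 0) \<longrightarrow> (\<forall>l<d. \<tau> l > 0) \<longrightarrow>
         (\<exists>C::nat \<Rightarrow> complex. (\<forall>j\<in>{1..m}. norm (C j) \<le> 11) \<and>
            sparse_signal d k v f t0 =
              (\<Sum>j\<in>{1..m}. C j * sparse_signal d k v f (\<lambda>l. t0 l + real j * \<tau> l)))))"
proof (intro exI[of _ "257 / ln 2"] conjI allI)
  show "(0::real) < 257 / ln 2" by simp
  fix k d :: nat
  define L where "L = nat \<lceil>log 2 (real k + 1)\<rceil>"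
  define N where "N = 128*k^2*L"
  show "\<exists>m::nat. real m \<le> (257 / ln 2) * (real k)^2 * ln (real k + 1) \<and>
      (\<forall>(v::nat \<Rightarrow> complex) (f::nat \<Rightarrow> nat \<Rightarrow> real) (t0::nat \<Rightarrow> real) (\<tau>::nat \<Rightarrow> real).
         (\<forall>l<d. t0 l \<ge> 0) \<longrightarrow> (\<forall>l<d. \<tau> l > 0) \<longrightarrow>
         (\<exists>C::nat \<Rightarrow> complex. (\<forall>j\<in>{1..m}. norm (C j) \<le> 11) \<and>
            sparse_signal d k v f t0 =
              (\<Sum>j\<in>{1..m}. C j * sparse_signal d k v f (\<lambda>l. t0 l + real j * \<tau> l))))"
  proof (intro exI[of _ "k + N"] conjI allI impI)
    show "real (k + N) \<le> (257 / ln 2) * (real k)^2 * ln (real k + 1)"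
      unfolding N_def L_def by (rule mbound)
    fix v :: "nat \<Rightarrow> complex" and f :: "nat \<Rightarrow> nat \<Rightarrow> real" and t0 \<tau> :: "nat \<Rightarrow> real"
    define w where "w i = v i * exp (2 * pi * \<i> * complex_of_real (inner_d d (f i) t0))" for i
    define z where "z i = exp (2 * pi * \<i> * complex_of_real (inner_d d (f i) \<tau>))" for i
    have sig0: "sparse_signal d k v f t0 = (\<Sum>i<k. w i)" unfolding w_def by (rule signal_zero)
    have sigj: "sparse_signal d k v f (\<lambda>l. t0 l + real j * \<tau> l) = (\<Sum>i<k. w i * z i ^ j)" for j
      unfolding w_def z_def by (rule signal_shift)
    have zu: "norm (z i) = 1" for i unfolding z_def by (simp add: norm_exp_eq_Re)
    show "\<exists>C::nat \<Rightarrow> complex. (\<forall>j\<in>{1..k+N}. norm (C j) \<le> 11) \<and>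
            sparse_signal d k v f t0 =
              (\<Sum>j\<in>{1..k+N}. C j * sparse_signal d k v f (\<lambda>l. t0 l + real j * \<tau> l))"
    proof (cases "k = 0")
      case True
      then show ?thesis unfolding sig0 sigj by (intro exI[of _ "\<lambda>_. 0"]) simp
    next
      case False
      then have k: "k \<ge> 1" by simp
      have big: "(2 * ((k+N)^(k+1) * (k * 2^(k+1))) + 3)^(2*k) < (2::nat)^N"
        unfolding N_def using bigineq[OF k Lprops(1)[OF k] Lprops(2)[OF k]] unfolding L_def .
      have un: "norm (cnj (z i)) \<le> 1" for i using zu[of i] by simp
      obtain q t where tk: "k \<le> t" "t < k + N" and qt: "norm (q t) = 1" and qb: "\<forall>j. norm (q j) \<le> 1"
        and ev: "\<forall>i<k. (\<Sum>j\<le>t. q j * cnj (z i) ^ j) = 0"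
        using core[of k "\<lambda>i. cnj (z i)" N, OF k un big] by blast
      have "\<exists>C. (\<forall>j\<in>{1..k+N}. norm (C j) \<le> 11) \<and>
           (\<Sum>i<k. w i) = (\<Sum>j\<in>{1..k+N}. C j * (\<Sum>i<k. w i * z i ^ j))"
        using zu qt qb ev tk by (intro recover[of z q t k "k+N" w]) auto
      then show ?thesis unfolding sig0 sigj .
    qed
  qed
qed

end
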